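(* Let $f\in\mathbb{C}[h]$ and let $V$ be a simple $\mathcal{H}(f)$-module with $\dim V=n<\infty$. If $yV=V$ and $x^nV=0$, then $V\cong B'_{\mathcal{H}(f)}(\lambda,\dot z,a)$ for some $\dot z\in\mathbb{C}$, $a\in\mathbb{C}^*$ and $\lambda\in S_f$ with $|\lambda|=n$ such that $\lambda(i)+\dot z=0$ for some $i\in\mathbb{Z}$.
   Context: For $f(h)\in\mathbb{C}[h]$, $\mathcal{H}(f)$ is the unital associative $\mathbb{C}$-algebra generated by $x,y,h$ with relations $hx=xf(h)$, $yh=f(h)y$, $yx-xy=f(h)-h$. $S_f$ is the set of maps $\lambda:\mathbb{Z}\to\mathbb{C}$ with $f(\lambda(i))=\lambda(i+1)$ for all $i$; $|\lambda|$ is the nonnegative generator of the subgroup $\{m\in\mathbb{Z}\mid\lambda(i+m)=\lambda(i)\ \forall i\}$. For $\lambda\in S_f$ with $|\lambda|=m\neq0$, $\dot z\in\mathbb{C}$, $a\in\mathbb{C}^*$: $B'_{\mathcal{H}(f)}(\lambda,\dot z,a)$ is the quotient of $\mathbb{C}[t,t^{-1}]$ by $\mathbb{C}[t,t^{-1}](t^m-a)$, with $\mathcal{H}(f)$-action induced by $ht^i=\lambda(i)t^i$, $xt^i=(\lambda(i+1)+\dot z)t^{i+1}$, $yt^i=t^{i-1}$ ($i\in\mathbb{Z}$). *)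

theory Defs
  imports "Jordan_Normal_Form.Matrix" "HOL-Computational_Algebra.Polynomial"
begin

(* Evaluation of a polynomial at a square n x n matrix: f(A) = sum_i coeff f i * A^i *)
definition mat_poly :: "nat \<Rightarrow> complex poly \<Rightarrow> complex mat \<Rightarrow> complex mat" where
  "mat_poly n f A = foldr (\<lambda>i B. coeff f i \<cdot>\<^sub>m (A ^\<^sub>m i) + B) [0..<Suc (degree f)] (0\<^sub>m n n)"

(* An H(f)-module structure on V = C^n, given by the matrices of x, y, h:
   hx = x f(h),  yh = f(h) y,  yx - xy = f(h) - h *)
definition Hf_module :: "complex poly \<Rightarrow> nat \<Rightarrow> complex mat \<Rightarrow> complex mat \<Rightarrow> complex mat \<Rightarrow> bool" where
  "Hf_module f n X Y H \<longleftrightarrow>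
     X \<in> carrier_mat n n \<and> Y \<in> carrier_mat n n \<and> H \<in> carrier_mat n n \<and>
     H * X = X * mat_poly n f H \<and>
     Y * H = mat_poly n f H * Y \<and>
     Y * X - X * Y = mat_poly n f H - H"

(* subspace of C^n *)
definition subspace_vec :: "nat \<Rightarrow> complex vec set \<Rightarrow> bool" where
  "subspace_vec n W \<longleftrightarrow> W \<subseteq> carrier_vec n \<and> 0\<^sub>v n \<in> W \<and>
     (\<forall>v\<in>W. \<forall>w\<in>W. v + w \<in> W) \<and> (\<forall>c. \<forall>v\<in>W. c \<cdot>\<^sub>v v \<in> W)"

(* simple module: nonzero, and the only submodules are 0 and V *)
definition simple_Hf_module :: "complex poly \<Rightarrow> nat \<Rightarrow> complex mat \<Rightarrow> complex mat \<Rightarrow> complex mat \<Rightarrow> bool" where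
  "simple_Hf_module f n X Y H \<longleftrightarrow> Hf_module f n X Y H \<and> n \<noteq> 0 \<and>
     (\<forall>W. subspace_vec n W \<and> (\<forall>v\<in>W. X *\<^sub>v v \<in> W \<and> Y *\<^sub>v v \<in> W \<and> H *\<^sub>v v \<in> W)
          \<longrightarrow> W = {0\<^sub>v n} \<or> W = carrier_vec n)"

(* isomorphism of modules on C^n: simultaneous similarity *)
definition Hf_iso :: "nat \<Rightarrow> complex mat \<Rightarrow> complex mat \<Rightarrow> complex mat \<Rightarrow>
                      complex mat \<Rightarrow> complex mat \<Rightarrow> complex mat \<Rightarrow> bool" where
  "Hf_iso n X Y H X' Y' H' \<longleftrightarrow> (\<exists>P Q. P \<in> carrier_mat n n \<and> Q \<in> carrier_mat n n \<and>
      P * Q = 1\<^sub>m n \<and> Q * P = 1\<^sub>m n \<and>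
      P * X = X' * P \<and> P * Y = Y' * P \<and> P * H = H' * P)"

(* S_f *)
definition S_f :: "complex poly \<Rightarrow> (int \<Rightarrow> complex) set" where
  "S_f f = {lam. \<forall>i. poly f (lam i) = lam (i + 1)}"

(* |lam| = m : m is the nonnegative generator of the group of periods *)
definition seq_order :: "(int \<Rightarrow> complex) \<Rightarrow> int \<Rightarrow> bool" where
  "seq_order lam m \<longleftrightarrow> m \<ge> 0 \<and> {k. \<forall>i. lam (i + k) = lam i} = {j * m | j. True}"

(* B'(lam, z, a) with m = |lam| > 0, written in the basis t^0,...,t^(m-1) of
   C[t,t^-1]/(t^m - a).  Column j is the image of t^j.
   h t^j = lam j t^j;
   x t^j = (lam (j+1) + z) t^(j+1), where t^m = a t^0;
   y t^j = t^(j-1), where t^(-1) = a^-1 t^(m-1). *)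
definition B'_H :: "nat \<Rightarrow> (int \<Rightarrow> complex) \<Rightarrow> complex mat" where
  "B'_H m lam = mat m m (\<lambda>(i, j). if i = j then lam (int j) else 0)"

definition B'_X :: "nat \<Rightarrow> (int \<Rightarrow> complex) \<Rightarrow> complex \<Rightarrow> complex \<Rightarrow> complex mat" where
  "B'_X m lam z a = mat m m (\<lambda>(i, j). if i = (j + 1) mod m
       then (lam (int j + 1) + z) * (if j + 1 = m then a else 1) else 0)"

definition B'_Y :: "nat \<Rightarrow> complex \<Rightarrow> complex mat" where
  "B'_Y m a = mat m m (\<lambda>(i, j). if i = (j + m - 1) mod m
       then (if j = 0 then inverse a else 1) else 0)"

end

theory Submission
  imports Defs "Jordan_Normal_Form.Char_Poly" "HOL-Computational_Algebra.Fundamental_Theorem_Algebra"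
begin

definition lc :: "nat \<Rightarrow> nat \<Rightarrow> (nat \<Rightarrow> complex vec) \<Rightarrow> (nat \<Rightarrow> complex) \<Rightarrow> complex vec" where
 "lc n m w c = vec n (\<lambda>i. \<Sum>k<m. c k * w k $ i)"

lemma lc_carrier[simp]: "lc n m w c \<in> carrier_vec n" unfolding lc_def by simp

lemma dim_lc[simp]: "dim_vec (lc n m w c) = n" unfolding lc_def by simp

lemma mult_lc: assumes A: "A \<in> carrier_mat n n" and w: "\<And>k. k<m \<Longrightarrow> w k \<in> carrier_vec n"
 shows "A *\<^sub>v lc n m w c = vec n (\<lambda>i. \<Sum>k<m. c k * (A *\<^sub>v w k) $ i)"
proof (rule eq_vecI)
  fix i assume "i < dim_vec (vec n (\<lambda>i. \<Sum>k<m. c k * (A *\<^sub>v w k) $ i))"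
  hence i: "i < n" by simp
  have "(A *\<^sub>v lc n m w c) $ i = (\<Sum>j<n. A $$ (i,j) * (\<Sum>k<m. c k * w k $ j))"
    using A i by (simp add: scalar_prod_def lc_def atLeast0LessThan)
  also have "\<dots> = (\<Sum>k<m. c k * (\<Sum>j<n. A $$ (i,j) * w k $ j))"
    by (simp add: sum_distrib_left sum.swap[of _ "{..<n}"] mult_ac)
  also have "\<dots> = (\<Sum>k<m. c k * (A *\<^sub>v w k) $ i)"
    apply (intro sum.cong refl)
    subgoal for k using w[of k] A i by (auto simp: scalar_prod_def atLeast0LessThan)
    done
  finally show "(A *\<^sub>v lc n m w c) $ i = vec n (\<lambda>i. \<Sum>k<m. c k * (A *\<^sub>v w k) $ i) $ i" using i by simp
qed (use A in simp)

lemma lc_add: "lc n m w c + lc n m w d = lc n m w (\<lambda>k. c k + d k)"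
  by (rule eq_vecI) (auto simp: lc_def sum.distrib algebra_simps)

lemma lc_diff: "lc n m w c - lc n m w d = lc n m w (\<lambda>k. c k - d k)"
  by (rule eq_vecI) (auto simp: lc_def sum_subtractf algebra_simps)

lemma lc_smult: "r \<cdot>\<^sub>v lc n m w c = lc n m w (\<lambda>k. r * c k)"
  by (rule eq_vecI) (auto simp: lc_def sum_distrib_left algebra_simps)

lemma lc_zero: "lc n m w (\<lambda>k. 0) = 0\<^sub>v n"
  by (rule eq_vecI) (auto simp: lc_def)

lemma lc_cong: "(\<And>k. k < m \<Longrightarrow> c k = d k) \<Longrightarrow> lc n m w c = lc n m w d"
  unfolding lc_def by (intro arg_cong[where f = "vec n"] ext sum.cong) auto

lemma mult_zero_vec_n: "S \<in> carrier_mat n n \<Longrightarrow> S *\<^sub>v 0\<^sub>v n = (0\<^sub>v n :: complex vec)"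
  by (rule eq_vecI) auto

definition hv :: "complex mat \<Rightarrow> complex vec \<Rightarrow> complex poly \<Rightarrow> complex vec" where
  "hv S v p = foldr (\<lambda>a w. a \<cdot>\<^sub>v v + S *\<^sub>v w) (coeffs p) (0\<^sub>v (dim_vec v))"

lemma foldr_hv_carrier: assumes "S \<in> carrier_mat n n" "v \<in> carrier_vec n"
  shows "foldr (\<lambda>a w. a \<cdot>\<^sub>v v + S *\<^sub>v w) xs (0\<^sub>v (dim_vec v)) \<in> carrier_vec n"
  using assms by (induct xs) auto

lemma hv_carrier[simp]: "S \<in> carrier_mat n n \<Longrightarrow> v \<in> carrier_vec n \<Longrightarrow> hv S v p \<in> carrier_vec n"
  unfolding hv_def by (rule foldr_hv_carrier)

lemma dim_hv[simp]: "S \<in> carrier_mat n n \<Longrightarrow> v \<in> carrier_vec n \<Longrightarrow> dim_vec (hv S v p) = n"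
  using hv_carrier carrier_vecD by blast

lemma hv_0[simp]: "v \<in> carrier_vec n \<Longrightarrow> hv S v 0 = 0\<^sub>v n"
  unfolding hv_def by auto

lemma hv_pCons: assumes S: "S \<in> carrier_mat n n" and v: "v \<in> carrier_vec n"
  shows "hv S v (pCons a p) = a \<cdot>\<^sub>v v + S *\<^sub>v hv S v p"
proof (cases "a = 0 \<and> p = 0")
  case True
  then show ?thesis using S v by (auto simp: mult_zero_vec_n)
next
  case False
  then have "coeffs (pCons a p) = a # coeffs p" by (auto simp: cCons_def)
  then show ?thesis unfolding hv_def by simp
qed

lemma hv_add: assumes S: "S \<in> carrier_mat n n" and v: "v \<in> carrier_vec n"
  shows "hv S v (p + q) = hv S v p + hv S v q"
proof (induct p q rule: poly_induct2)
  case 0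
  then show ?case using v by simp
next
  case (pCons a p b q)
  have "hv S v (pCons a p + pCons b q) = (a+b) \<cdot>\<^sub>v v + S *\<^sub>v (hv S v p + hv S v q)"
    using pCons S v by (simp add: hv_pCons)
  also have "\<dots> = (a \<cdot>\<^sub>v v + S *\<^sub>v hv S v p) + (b \<cdot>\<^sub>v v + S *\<^sub>v hv S v q)"
    using S v by (subst mult_add_distrib_mat_vec[OF S]) (auto intro!: eq_vecI simp: algebra_simps)
  finally show ?case using S v by (simp add: hv_pCons)
qed

lemma hv_smult: assumes S: "S \<in> carrier_mat n n" and v: "v \<in> carrier_vec n"
  shows "hv S v (smult r p) = r \<cdot>\<^sub>v hv S v p"
proof (induct p)
  case 0
  then show ?case using v by (auto intro!: eq_vecI)
next
  case (pCons a p)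
  have "hv S v (smult r (pCons a p)) = (r*a) \<cdot>\<^sub>v v + S *\<^sub>v (r \<cdot>\<^sub>v hv S v p)"
    using pCons S v by (simp add: hv_pCons)
  also have "\<dots> = r \<cdot>\<^sub>v (a \<cdot>\<^sub>v v + S *\<^sub>v hv S v p)"
    using S v by (subst mult_mat_vec[OF S]) (auto intro!: eq_vecI simp: algebra_simps)
  finally show ?case using S v by (simp add: hv_pCons)
qed

lemma hv_lin: assumes S: "S \<in> carrier_mat n n" and v: "v \<in> carrier_vec n"
  shows "hv S v ([:-r,1:] * q) = S *\<^sub>v hv S v q - r \<cdot>\<^sub>v hv S v q"
proof -
  have hc: "dim_vec (hv S v q) = n" using hv_carrier[OF S v] carrier_vecD by blast
  have e: "[:-r,1:] * q = smult (-r) q + pCons 0 q" by simp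
  have "hv S v ([:-r,1:] * q) = (-r) \<cdot>\<^sub>v hv S v q + (0 \<cdot>\<^sub>v v + S *\<^sub>v hv S v q)"
    unfolding e hv_add[OF S v] hv_smult[OF S v] hv_pCons[OF S v] ..
  also have "\<dots> = S *\<^sub>v hv S v q - r \<cdot>\<^sub>v hv S v q"
    apply (rule eq_vecI)
    subgoal for i using S v by simp
    using S v by simp
  finally show ?thesis .
qed

lemma hv_inW: assumes S: "S \<in> carrier_mat n n" and W: "subspace_vec n W"
  and inv: "\<And>u. u \<in> W \<Longrightarrow> S *\<^sub>v u \<in> W" and v: "v \<in> W"
  shows "hv S v p \<in> W"
proof (induct p)
  case 0
  then show ?case using W v by (auto simp: subspace_vec_def)
next
  case (pCons a p)
  have vc: "v \<in> carrier_vec n" using W v by (auto simp: subspace_vec_def)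
  show ?case unfolding hv_pCons[OF S vc]
    using W v pCons inv by (auto simp: subspace_vec_def)
qed


lemma hv_link: assumes S: "S \<in> carrier_mat n n" and v: "v \<in> carrier_vec n"
  shows "degree p \<le> N \<Longrightarrow> hv S v p = lc n (Suc N) (\<lambda>k. ((*\<^sub>v) S ^^ k) v) (coeff p)"
proof (induct p arbitrary: N)
  case 0
  have "coeff (0::complex poly) = (\<lambda>k. 0)" by auto
  then show ?case using v by (simp add: lc_zero)
next
  case (pCons a p)
  let ?u = "\<lambda>k. ((*\<^sub>v) S ^^ k) v"
  have uc: "\<And>k. ?u k \<in> carrier_vec n" subgoal for k by (induct k) (use S v in auto) done
  have Sh: "S *\<^sub>v hv S v p = vec n (\<lambda>i. \<Sum>k<N. coeff p k * ?u (Suc k) $ i)"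
  proof (cases N)
    case 0
    with pCons have "p = 0" by (auto split: if_splits)
    then show ?thesis using 0 S v by (auto simp: mult_zero_vec_n intro!: eq_vecI)
  next
    case (Suc N')
    with pCons have "degree p \<le> N'" by (auto split: if_splits)
    from pCons(2)[OF this] Suc have "hv S v p = lc n N ?u (coeff p)" by simp
    then show ?thesis using S uc by (simp add: mult_lc)
  qed
  show ?case
  proof (rule eq_vecI)
    fix i assume "i < dim_vec (lc n (Suc N) ?u (coeff (pCons a p)))"
    hence i: "i < n" by simp
    have "lc n (Suc N) ?u (coeff (pCons a p)) $ i = a * v $ i + (\<Sum>k<N. coeff p k * ?u (Suc k) $ i)"
      using i unfolding lc_def index_vec[OF i] by (simp only: sum.lessThan_Suc_shift) simp
    also have "\<dots> = hv S v (pCons a p) $ i"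
      unfolding hv_pCons[OF S v] using i S v Sh by simp
    finally show "hv S v (pCons a p) $ i = lc n (Suc N) ?u (coeff (pCons a p)) $ i" by simp
  qed (use S v in simp)
qed

lemma nonzero_vec_index: "v \<in> carrier_vec n \<Longrightarrow> v \<noteq> 0\<^sub>v n \<Longrightarrow> \<exists>i<n. v $ i \<noteq> 0"
  by (metis carrier_vecD eq_vecI index_zero_vec)

lemma eig_in_sub:
  assumes S: "S \<in> carrier_mat n n" and W: "subspace_vec n W"
    and inv: "\<And>u. u \<in> W \<Longrightarrow> S *\<^sub>v u \<in> W" and v: "v \<in> W" and v0: "v \<noteq> 0\<^sub>v n"
  shows "\<exists>u r. u \<in> W \<and> u \<noteq> 0\<^sub>v n \<and> S *\<^sub>v u = r \<cdot>\<^sub>v u"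
proof -
  have vc: "v \<in> carrier_vec n" using W v by (auto simp: subspace_vec_def)
  have Wc: "\<And>u. u \<in> W \<Longrightarrow> u \<in> carrier_vec n" using W by (auto simp: subspace_vec_def)
  have fact: "p \<noteq> 0 \<Longrightarrow> hv S v p = 0\<^sub>v n \<Longrightarrow> ?thesis" for p
  proof (induct "degree p" arbitrary: p rule: less_induct)
    case (less p)
    show ?case
    proof (cases "degree p = 0")
      case True
      then obtain a where p: "p = pCons a 0" using degree_eq_zeroE by blast
      with less have a: "a \<noteq> 0" by auto
      from less(3) have "a \<cdot>\<^sub>v v = 0\<^sub>v n" unfolding p hv_pCons[OF S vc] using S vc
        by (simp add: mult_zero_vec_n)
      moreover obtain i where "i < n" "v $ i \<noteq> 0" using nonzero_vec_index[OF vc v0] by blast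
      ultimately show ?thesis using a by (metis index_smult_vec(1) index_zero_vec(1) carrier_vecD[OF vc] mult_eq_0_iff)
    next
      case False
      then have "\<not> constant (poly p)" by (simp add: constant_degree)
      then obtain r where "poly p r = 0" using fundamental_theorem_of_algebra by blast
      then obtain q where pq: "p = [:-r,1:] * q" using poly_eq_0_iff_dvd by (metis dvdE)
      have q0: "q \<noteq> 0" using less(2) pq by auto
      have "degree ([:-r,1:] * q) = degree [:-r,1::complex:] + degree q" by (rule degree_mult_eq) (use q0 in auto)
      then have dq: "degree q < degree p" unfolding pq by simp
      show ?thesis
      proof (cases "hv S v q = 0\<^sub>v n")
        case True
        then show ?thesis using less(1)[OF dq q0] by blast
      next
        case False
        have uW: "hv S v q \<in> W" by (rule hv_inW[OF S W inv v])
        have "S *\<^sub>v hv S v q - r \<cdot>\<^sub>v hv S v q = 0\<^sub>v n" using less(3) hv_lin[OF S vc, of r q] pq by simp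
        then have "S *\<^sub>v hv S v q = r \<cdot>\<^sub>v hv S v q"
          apply (intro eq_vecI)
          subgoal for i using S vc by (metis carrier_vecD dim_hv index_minus_vec(1) index_zero_vec(1) right_minus_eq index_smult_vec(2) mult_mat_vec_carrier)
          using S vc by simp
        then show ?thesis using uW False by blast
      qed
    qed
  qed
  define uu where "uu k = ((*\<^sub>v) S ^^ k) v" for k
  have uuc: "\<And>k. uu k \<in> carrier_vec n" unfolding uu_def subgoal for k by (induct k) (use S vc in auto) done
  define M where "M = mat\<^sub>r (Suc n) (Suc n) (\<lambda>i. if i = n then 0\<^sub>v (Suc n) else vec (Suc n) (\<lambda>k. uu k $ i))"
  have "det M = 0" unfolding M_def by (rule det_row_0) auto
  then obtain c where c: "c \<in> carrier_vec (Suc n)" "c \<noteq> 0\<^sub>v (Suc n)" "M *\<^sub>v c = 0\<^sub>v (Suc n)"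
    using det_0_iff_vec_prod_zero[of M "Suc n"] unfolding M_def by auto
  have rel: "(\<Sum>k<Suc n. c $ k * uu k $ i) = 0" if i: "i < n" for i
  proof -
    have "(M *\<^sub>v c) $ i = 0" using c(3) i by simp
    moreover have "(M *\<^sub>v c) $ i = (\<Sum>k<Suc n. uu k $ i * c $ k)"
      using i c(1) unfolding M_def by (simp add: scalar_prod_def atLeast0LessThan)
    ultimately show ?thesis by (simp add: mult.commute)
  qed
  define p where "p = Poly (list_of_vec c)"
  have cp: "coeff p k = (if k < Suc n then c $ k else 0)" for k
    using c(1) by (auto simp: p_def nth_default_def list_of_vec_index)
  obtain k where k: "k < Suc n" "c $ k \<noteq> 0" using nonzero_vec_index[OF c(1,2)] by blast
  have p0: "p \<noteq> 0" using k cp[of k] by auto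
  have dp: "degree p \<le> n" by (rule degree_le) (auto simp: cp)
  have "hv S v p = 0\<^sub>v n"
    unfolding hv_link[OF S vc dp]
  proof (rule eq_vecI)
    fix i assume "i < dim_vec (0\<^sub>v n :: complex vec)"
    hence i: "i < n" by simp
    have ufold: "(\<lambda>k. ((*\<^sub>v) S ^^ k) v) = uu" by (simp add: uu_def fun_eq_iff)
    have "(\<Sum>k<Suc n. coeff p k * uu k $ i) = (\<Sum>k<Suc n. c $ k * uu k $ i)" by (rule sum.cong) (auto simp: cp)
    then show "lc n (Suc n) (\<lambda>k. ((*\<^sub>v) S ^^ k) v) (coeff p) $ i = 0\<^sub>v n $ i"
      using rel[OF i] i unfolding ufold lc_def by simp
  qed simp
  from fact[OF p0 this] show ?thesis .
qed

lemma mat_poly_carrier: assumes A: "A \<in> carrier_mat n n" shows "mat_poly n f A \<in> carrier_mat n n"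
proof -
  have "foldr (\<lambda>i B. coeff f i \<cdot>\<^sub>m (A ^\<^sub>m i) + B) is (0\<^sub>m n n) \<in> carrier_mat n n" for "is"
    using A by (induct "is") auto
  then show ?thesis unfolding mat_poly_def .
qed

lemma smult_mat_mult_vec: assumes M: "M \<in> carrier_mat n n" and u: "u \<in> carrier_vec n"
  shows "(c \<cdot>\<^sub>m M) *\<^sub>v u = c \<cdot>\<^sub>v (M *\<^sub>v (u :: complex vec))"
  by (rule eq_vecI) (use M u in \<open>auto simp: scalar_prod_def sum_distrib_left mult.assoc\<close>)

lemma pow_eig: assumes A: "A \<in> carrier_mat n n" and u: "u \<in> carrier_vec n"
  and e: "A *\<^sub>v u = \<alpha> \<cdot>\<^sub>v u"
  shows "(A ^\<^sub>m k) *\<^sub>v u = (\<alpha> ^ k) \<cdot>\<^sub>v (u :: complex vec)"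
proof (induct k)
  case 0
  then show ?case using u A by simp
next
  case (Suc k)
  have "(A ^\<^sub>m Suc k) *\<^sub>v u = (A ^\<^sub>m k) *\<^sub>v (A *\<^sub>v u)" 
    by (subst pow_mat.simps(2), rule assoc_mult_mat_vec[of "A ^\<^sub>m k" n n A n u]) (use A u in auto)
  also have "\<dots> = \<alpha> \<cdot>\<^sub>v ((A ^\<^sub>m k) *\<^sub>v u)" unfolding e by (rule mult_mat_vec[OF pow_carrier_mat[OF A] u])
  also have "\<dots> = (\<alpha> ^ Suc k) \<cdot>\<^sub>v u" unfolding Suc smult_smult_assoc by simp
  finally show ?case .
qed

lemma mat_poly_eig: assumes A: "A \<in> carrier_mat n n" and u: "u \<in> carrier_vec n"
  and e: "A *\<^sub>v u = \<alpha> \<cdot>\<^sub>v u"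
  shows "mat_poly n f A *\<^sub>v u = poly f \<alpha> \<cdot>\<^sub>v u"
proof -
  have "foldr (\<lambda>i B. coeff f i \<cdot>\<^sub>m (A ^\<^sub>m i) + B) is (0\<^sub>m n n) \<in> carrier_mat n n \<and>
        foldr (\<lambda>i B. coeff f i \<cdot>\<^sub>m (A ^\<^sub>m i) + B) is (0\<^sub>m n n) *\<^sub>v u = (\<Sum>i\<leftarrow>is. coeff f i * \<alpha> ^ i) \<cdot>\<^sub>v u" for "is"
  proof (induct "is")
    case Nil
    then show ?case using u by (auto intro!: eq_vecI)
  next
    case (Cons i "is")
    let ?B = "foldr (\<lambda>i B. coeff f i \<cdot>\<^sub>m (A ^\<^sub>m i) + B) is (0\<^sub>m n n)"
    have Bc: "?B \<in> carrier_mat n n" using Cons by simp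
    have Ai: "A ^\<^sub>m i \<in> carrier_mat n n" using A by simp
    have "(coeff f i \<cdot>\<^sub>m (A ^\<^sub>m i) + ?B) *\<^sub>v u = (coeff f i \<cdot>\<^sub>m (A ^\<^sub>m i)) *\<^sub>v u + ?B *\<^sub>v u"
      by (rule add_mult_distrib_mat_vec) (use A Bc u in auto)
    also have "\<dots> = (coeff f i * \<alpha> ^ i) \<cdot>\<^sub>v u + (\<Sum>i\<leftarrow>is. coeff f i * \<alpha> ^ i) \<cdot>\<^sub>v u"
      unfolding smult_mat_mult_vec[OF Ai u] pow_eig[OF A u e] Cons[THEN conjunct2] smult_smult_assoc ..
    also have "\<dots> = (\<Sum>i\<leftarrow>i # is. coeff f i * \<alpha> ^ i) \<cdot>\<^sub>v u"
      using u by (auto intro!: eq_vecI simp: algebra_simps)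
    finally show ?case using A Bc by simp
  qed
  then have "mat_poly n f A *\<^sub>v u = (\<Sum>i\<leftarrow>[0..<Suc (degree f)]. coeff f i * \<alpha> ^ i) \<cdot>\<^sub>v u"
    unfolding mat_poly_def by blast
  also have "(\<Sum>i\<leftarrow>[0..<Suc (degree f)]. coeff f i * \<alpha> ^ i) = poly f \<alpha>"
    unfolding poly_altdef interv_sum_list_conv_sum_set_nat
    by (simp only: atLeast0LessThan lessThan_Suc_atMost set_upt)
  finally show ?thesis .
qed

lemma pow_funpow: assumes A: "A \<in> carrier_mat n n"
  shows "u \<in> carrier_vec n \<Longrightarrow> (A ^\<^sub>m k) *\<^sub>v u = ((*\<^sub>v) A ^^ k) (u :: complex vec)"
proof (induct k arbitrary: u)
  case 0
  then show ?case using A by simp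
next
  case (Suc k)
  have "(A ^\<^sub>m Suc k) *\<^sub>v u = (A ^\<^sub>m k) *\<^sub>v (A *\<^sub>v u)" using A Suc by (subst pow_mat.simps(2), intro assoc_mult_mat_vec[of _ n n _ n]) auto
  also have "\<dots> = ((*\<^sub>v) A ^^ k) (A *\<^sub>v u)" using Suc A by simp
  finally show ?case by (simp add: funpow_Suc_right del: funpow.simps)
qed

lemma lc_eig: assumes A: "A \<in> carrier_mat n n" and w: "\<And>k. k<m \<Longrightarrow> w k \<in> carrier_vec n"
  and e: "\<And>k. k < m \<Longrightarrow> A *\<^sub>v w k = d k \<cdot>\<^sub>v w k"
  shows "A *\<^sub>v lc n m w cf = lc n m w (\<lambda>k. cf k * d k)"
  apply (subst mult_lc[OF A w]) apply simp unfolding lc_def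
  by (rule eq_vecI) (auto intro!: sum.cong simp: e carrier_vecD[OF w] mult.assoc)

lemma lc_shape: assumes A: "A \<in> carrier_mat n n" and w: "\<And>k. k<m \<Longrightarrow> w k \<in> carrier_vec n"
  and e: "\<And>k. k < m \<Longrightarrow> A *\<^sub>v w k = d k \<cdot>\<^sub>v w (\<sigma> k)" and s: "\<And>k. k < m \<Longrightarrow> \<sigma> k < m"
  shows "A *\<^sub>v lc n m w cf = lc n m w (\<lambda>j. \<Sum>k<m. if \<sigma> k = j then cf k * d k else 0)"
proof (rule eq_vecI)
  fix i assume "i < dim_vec (lc n m w (\<lambda>j. \<Sum>k<m. if \<sigma> k = j then cf k * d k else 0))"
  hence i: "i < n" by simp
  have wd: "\<And>k. k < m \<Longrightarrow> dim_vec (w k) = n" by (rule carrier_vecD[OF w])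
  have "(A *\<^sub>v lc n m w cf) $ i = (\<Sum>k<m. cf k * (d k * w (\<sigma> k) $ i))"
    using i by (subst mult_lc[OF A w]) (auto intro!: sum.cong simp: e wd s)
  also have "\<dots> = (\<Sum>k<m. \<Sum>j<m. if \<sigma> k = j then cf k * d k * w j $ i else 0)"
    by (intro sum.cong refl) (auto simp: s mult.assoc)
  also have "\<dots> = (\<Sum>j<m. \<Sum>k<m. if \<sigma> k = j then cf k * d k * w j $ i else 0)"
    by (rule sum.swap)
  also have "\<dots> = lc n m w (\<lambda>j. \<Sum>k<m. if \<sigma> k = j then cf k * d k else 0) $ i"
    unfolding lc_def using i by (auto simp: sum_distrib_right intro!: sum.cong)
  finally show "(A *\<^sub>v lc n m w cf) $ i = lc n m w (\<lambda>j. \<Sum>k<m. if \<sigma> k = j then cf k * d k else 0) $ i" .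
qed (use A in simp)

lemma lc_Suc: "lc n (Suc m) w c = lc n m w c + c m \<cdot>\<^sub>v w m" if "w m \<in> carrier_vec n"
  using that by (auto intro!: eq_vecI simp: lc_def)

lemma mat_shape: assumes A: "A \<in> carrier_mat n n" and w: "\<And>k. k<n \<Longrightarrow> w k \<in> carrier_vec n"
  and e: "\<And>k. k < n \<Longrightarrow> A *\<^sub>v w k = d k \<cdot>\<^sub>v w (\<sigma> k)" and s: "\<And>k. k < n \<Longrightarrow> \<sigma> k < n"
  shows "A * mat n n (\<lambda>(i,k). w k $ i) = mat n n (\<lambda>(i,k). w k $ i) * mat n n (\<lambda>(i,k). if i = \<sigma> k then d k else (0::complex))"
proof (rule eq_matI)
  fix r k assume r: "r < dim_row (mat n n (\<lambda>(i,k). w k $ i) * mat n n (\<lambda>(i,k). if i = \<sigma> k then d k else (0::complex)))"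
    and k: "k < dim_col (mat n n (\<lambda>(i,k). w k $ i) * mat n n (\<lambda>(i,k). if i = \<sigma> k then d k else (0::complex)))"
  from r k have r: "r < n" and k: "k < n" by auto
  have cw: "col (mat n n (\<lambda>(i,k). w k $ i)) k = w k" using w[OF k] k by (auto intro!: eq_vecI)
  have "(A * mat n n (\<lambda>(i,k). w k $ i)) $$ (r,k) = (A *\<^sub>v w k) $ r"
    using A r k cw by simp
  also have "\<dots> = d k * w (\<sigma> k) $ r" using e[OF k] w[OF s[OF k]] r by simp
  also have "\<dots> = (\<Sum>i<n. w i $ r * (if i = \<sigma> k then d k else 0))"
    using s[OF k] by (simp add: if_distrib[of "\<lambda>x. _ * x"] sum.delta mult.commute cong: if_cong)
  also have "\<dots> = (mat n n (\<lambda>(i,k). w k $ i) * mat n n (\<lambda>(i,k). if i = \<sigma> k then d k else (0::complex))) $$ (r,k)"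
    using r k by (simp add: scalar_prod_def atLeast0LessThan)
  finally show "(A * mat n n (\<lambda>(i,k). w k $ i)) $$ (r,k) = (mat n n (\<lambda>(i,k). w k $ i) * mat n n (\<lambda>(i,k). if i = \<sigma> k then d k else (0::complex))) $$ (r,k)" .
qed (use A in auto)

lemma iso_from: assumes P: "P \<in> carrier_mat n n" and Q: "Q \<in> carrier_mat n n" and A: "A \<in> carrier_mat n n"
  and B: "B \<in> carrier_mat n n" and PQ: "P * Q = 1\<^sub>m n" and QP: "Q * P = 1\<^sub>m n" and AP: "A * P = P * (B :: complex mat)"
  shows "Q * A = B * Q"
proof -
  have "Q * A = Q * A * (P * Q)" using Q A by (simp add: PQ)
  also have "\<dots> = Q * (A * P) * Q" using P Q A by (simp add: assoc_mult_mat[of _ n n _ n _ n])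
  also have "\<dots> = Q * (P * B) * Q" by (simp add: AP)
  also have "\<dots> = (Q * P) * B * Q" using P Q B by (simp add: assoc_mult_mat[of _ n n _ n _ n])
  also have "\<dots> = B * Q" using B Q by (simp add: QP)
  finally show ?thesis .
qed

lemma vec_rearr: assumes "a \<in> carrier_vec n" "b \<in> carrier_vec n" "c \<in> carrier_vec n" "d \<in> carrier_vec n"
  and "a - b = c - (d :: complex vec)" shows "a = b + c - d"
proof (rule eq_vecI)
  fix i assume "i < dim_vec (b + c - d)"
  then have i: "i < n" using assms by simp
  have "(a - b) $ i = (c - d) $ i" using assms(5) by simp
  then have "a $ i = (c $ i - d $ i) + b $ i" using i assms(1-4) by (simp add: diff_eq_eq)
  then show "a $ i = (b + c - d) $ i" using i assms(1-4) by (simp add: algebra_simps)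
qed (use assms in simp)

lemma vec_minus0: assumes "a \<in> carrier_vec n" "b \<in> carrier_vec n" "a - b = 0\<^sub>v n" shows "a = (b :: complex vec)"
proof (rule eq_vecI)
  fix i assume "i < dim_vec b"
  then have i: "i < n" using assms by simp
  have "(a - b) $ i = 0\<^sub>v n $ i" using assms(3) by simp
  then show "a $ i = b $ i" using i assms(1-2) by simp
qed (use assms in simp)

lemma vec_arith1: assumes "p \<in> carrier_vec n" "q \<in> carrier_vec n" "r \<in> carrier_vec n"
  shows "p + q - r - q = p - (r :: complex vec)"
  by (rule eq_vecI) (use assms in auto)

lemma vec_rearr2: assumes "a \<in> carrier_vec n" "b \<in> carrier_vec n" "d \<in> carrier_vec n"
  and "a - b = (d :: complex vec)" shows "a = b + d"
proof (rule eq_vecI)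
  fix i assume "i < dim_vec (b + d)"
  then have i: "i < n" using assms by simp
  have "(a - b) $ i = d $ i" using assms(4) by simp
  then show "a $ i = (b + d) $ i" using i assms(1-3) by (simp add: diff_eq_eq add.commute)
qed (use assms in simp)

lemma eigsp_subspace: assumes A: "A \<in> carrier_mat n n"
  shows "subspace_vec n {u \<in> carrier_vec n. A *\<^sub>v u = c \<cdot>\<^sub>v (u :: complex vec)}"
proof -
  have W2: "A *\<^sub>v 0\<^sub>v n = c \<cdot>\<^sub>v 0\<^sub>v n" using mult_zero_vec_n[OF A] by (auto intro!: eq_vecI)
  have W3: "A *\<^sub>v (v + w) = c \<cdot>\<^sub>v (v + w)" if vw: "v \<in> carrier_vec n" "w \<in> carrier_vec n" "A *\<^sub>v v = c \<cdot>\<^sub>v v" "A *\<^sub>v w = c \<cdot>\<^sub>v w" for v w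
    unfolding mult_add_distrib_mat_vec[OF A vw(1,2)] smult_add_distrib_vec[OF vw(1,2)] vw(3,4) ..
  have W4: "A *\<^sub>v (r \<cdot>\<^sub>v v) = c \<cdot>\<^sub>v (r \<cdot>\<^sub>v v)" if vw: "v \<in> carrier_vec n" "A *\<^sub>v v = c \<cdot>\<^sub>v v" for r v
    unfolding mult_mat_vec[OF A vw(1)] vw(2) smult_smult_assoc by (simp add: mult.commute)
  show ?thesis unfolding subspace_vec_def using W2 W3 W4 by auto
qed

theorem lemma10:
  fixes f :: "complex poly" and n :: nat and X Y H :: "complex mat"
  assumes "simple_Hf_module f n X Y H"
    and "{Y *\<^sub>v v | v. v \<in> carrier_vec n} = carrier_vec n"
    and "X ^\<^sub>m n = 0\<^sub>m n n"
  shows "\<exists>z a lam. a \<noteq> 0 \<and> lam \<in> S_f f \<and> seq_order lam (int n) \<and>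
           (\<exists>i. lam i + z = 0) \<and>
           Hf_iso n X Y H (B'_X n lam z a) (B'_Y n a) (B'_H n lam)"
proof -
  define F where "F = mat_poly n f H"
  from assms(1) have X: "X \<in> carrier_mat n n" and Y: "Y \<in> carrier_mat n n" and H: "H \<in> carrier_mat n n"
    and HX: "H * X = X * F" and YH: "Y * H = F * Y" and YX: "Y * X - X * Y = F - H" and n0: "n \<noteq> 0"
    and simple: "\<And>W. subspace_vec n W \<Longrightarrow> (\<forall>v\<in>W. X *\<^sub>v v \<in> W \<and> Y *\<^sub>v v \<in> W \<and> H *\<^sub>v v \<in> W)
          \<Longrightarrow> W = {0\<^sub>v n} \<or> W = carrier_vec n"
    unfolding simple_Hf_module_def Hf_module_def F_def by blast+
  have Fc: "F \<in> carrier_mat n n" unfolding F_def by (rule mat_poly_carrier[OF H])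
  note cv = carrier_vecD
  (* vector level relations *)
  have v1: "H *\<^sub>v (X *\<^sub>v u) = X *\<^sub>v (F *\<^sub>v u)" if u: "u \<in> carrier_vec n" for u
  proof -
    have "(H * X) *\<^sub>v u = (X * F) *\<^sub>v u" by (simp add: HX)
    then show ?thesis using X H Fc u by simp
  qed
  have v2: "Y *\<^sub>v (H *\<^sub>v u) = F *\<^sub>v (Y *\<^sub>v u)" if u: "u \<in> carrier_vec n" for u
  proof -
    have "(Y * H) *\<^sub>v u = (F * Y) *\<^sub>v u" by (simp add: YH)
    then show ?thesis using Y H Fc u by simp
  qed
  have v3: "Y *\<^sub>v (X *\<^sub>v u) = X *\<^sub>v (Y *\<^sub>v u) + F *\<^sub>v u - H *\<^sub>v u" if u: "u \<in> carrier_vec n" for u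
  proof -
    have "(Y * X - X * Y) *\<^sub>v u = (F - H) *\<^sub>v u" by (simp add: YX)
    then have eq: "Y *\<^sub>v (X *\<^sub>v u) - X *\<^sub>v (Y *\<^sub>v u) = F *\<^sub>v u - H *\<^sub>v u"
      using X Y H Fc u by (simp add: minus_mult_distrib_mat_vec[of _ n n])
    show ?thesis by (rule vec_rearr[where n=n, OF _ _ _ _ eq]) (use X Y H Fc u in auto)
  qed
  have dX: "dim_row X = n" "dim_col X = n" using X by auto
  have dY: "dim_row Y = n" "dim_col Y = n" using Y by auto
  have dH: "dim_row H = n" "dim_col H = n" using H by auto
  have dF: "dim_row F = n" "dim_col F = n" using Fc by auto
  (* inverse of Y *)
  have surj: "\<exists>w. w \<in> carrier_vec n \<and> Y *\<^sub>v w = u" if "u \<in> carrier_vec n" for u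
  proof -
    have "u \<in> {Y *\<^sub>v v | v. v \<in> carrier_vec n}" using assms(2) that by simp
    then show ?thesis by blast
  qed
  define pre where "pre j = (SOME w. w \<in> carrier_vec n \<and> Y *\<^sub>v w = unit_vec n j)" for j
  have pre: "pre j \<in> carrier_vec n \<and> Y *\<^sub>v pre j = unit_vec n j" for j
    unfolding pre_def by (rule someI_ex) (rule surj, simp)
  define T where "T = mat n n (\<lambda>(i,j). pre j $ i)"
  have Tc: "T \<in> carrier_mat n n" unfolding T_def by simp
  have dT: "dim_row T = n" "dim_col T = n" using Tc by auto
  have YT: "Y * T = 1\<^sub>m n"
  proof (rule eq_matI)
    fix i j assume "i < dim_row (1\<^sub>m n :: complex mat)" "j < dim_col (1\<^sub>m n :: complex mat)"
    hence i: "i < n" and j: "j < n" by auto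
    have "col T j = pre j" using pre[of j] j unfolding T_def by (auto intro!: eq_vecI)
    then have "(Y * T) $$ (i,j) = (Y *\<^sub>v pre j) $ i" using dY dT i j by simp
    then show "(Y * T) $$ (i,j) = 1\<^sub>m n $$ (i,j)" using pre[of j] i j by simp
  qed (use dY dT in auto)
  have TY: "T * Y = 1\<^sub>m n" by (rule mat_mult_left_right_inverse[OF Y Tc YT])
  have YTu: "Y *\<^sub>v (T *\<^sub>v u) = u" if u: "u \<in> carrier_vec n" for u
    using assoc_mult_mat_vec[OF Y Tc u] YT u by simp
  have TYu: "T *\<^sub>v (Y *\<^sub>v u) = u" if u: "u \<in> carrier_vec n" for u
    using assoc_mult_mat_vec[OF Tc Y u] TY u by simp
  have v4: "H *\<^sub>v (T *\<^sub>v u) = T *\<^sub>v (F *\<^sub>v u)" if u: "u \<in> carrier_vec n" for u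
  proof -
    have "Y *\<^sub>v (H *\<^sub>v (T *\<^sub>v u)) = F *\<^sub>v u" using v2[of "T *\<^sub>v u"] YTu[OF u] Tc u by simp
    then have "T *\<^sub>v (Y *\<^sub>v (H *\<^sub>v (T *\<^sub>v u))) = T *\<^sub>v (F *\<^sub>v u)" by simp
    then show ?thesis using TYu[of "H *\<^sub>v (T *\<^sub>v u)"] H Tc u by simp
  qed
  have Teig: "H *\<^sub>v (T *\<^sub>v u) = poly f \<alpha> \<cdot>\<^sub>v (T *\<^sub>v u)" if u: "u \<in> carrier_vec n" and e: "H *\<^sub>v u = \<alpha> \<cdot>\<^sub>v u" for u \<alpha>
  proof -
    have "F *\<^sub>v u = poly f \<alpha> \<cdot>\<^sub>v u" unfolding F_def by (rule mat_poly_eig[OF H u e])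
    then show ?thesis using v4[OF u] mult_mat_vec[OF Tc u] by simp
  qed
  have Tinj: "u = 0\<^sub>v n" if u: "u \<in> carrier_vec n" and "T *\<^sub>v u = 0\<^sub>v n" for u
    using YTu[OF u] that(2) mult_zero_vec_n[OF Y] by simp
  (* Schur *)
  define Cm where "Cm = X * Y - H"
  have Cmc: "Cm \<in> carrier_mat n n" unfolding Cm_def using X Y H by auto
  have Cv: "Cm *\<^sub>v u = X *\<^sub>v (Y *\<^sub>v u) - H *\<^sub>v u" if u: "u \<in> carrier_vec n" for u
    unfolding Cm_def using X Y H u by (simp add: minus_mult_distrib_mat_vec[of _ n n])
  have comX: "Cm *\<^sub>v (X *\<^sub>v u) = X *\<^sub>v (Cm *\<^sub>v u)" if u: "u \<in> carrier_vec n" for u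
  proof -
    have "Cm *\<^sub>v (X *\<^sub>v u) = X *\<^sub>v (X *\<^sub>v (Y *\<^sub>v u) + F *\<^sub>v u - H *\<^sub>v u) - X *\<^sub>v (F *\<^sub>v u)"
      using Cv[of "X *\<^sub>v u"] v3[OF u] v1[OF u] X u by simp
    also have "\<dots> = X *\<^sub>v (X *\<^sub>v (Y *\<^sub>v u)) - X *\<^sub>v (H *\<^sub>v u)"
      using X Y H Fc u
      by (simp add: mult_minus_distrib_mat_vec[OF X] mult_add_distrib_mat_vec[OF X] vec_arith1[where n=n])
    also have "\<dots> = X *\<^sub>v (Cm *\<^sub>v u)"
      using Cv[OF u] X Y H u by (simp add: mult_minus_distrib_mat_vec[OF X])
    finally show ?thesis .
  qed
  have comY: "Cm *\<^sub>v (Y *\<^sub>v u) = Y *\<^sub>v (Cm *\<^sub>v u)" if u: "u \<in> carrier_vec n" for u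
  proof -
    have "Y *\<^sub>v (Cm *\<^sub>v u) = Y *\<^sub>v (X *\<^sub>v (Y *\<^sub>v u)) - Y *\<^sub>v (H *\<^sub>v u)"
      using Cv[OF u] X Y H u by (simp add: mult_minus_distrib_mat_vec[OF Y])
    also have "\<dots> = X *\<^sub>v (Y *\<^sub>v (Y *\<^sub>v u)) + F *\<^sub>v (Y *\<^sub>v u) - H *\<^sub>v (Y *\<^sub>v u) - F *\<^sub>v (Y *\<^sub>v u)"
      using v3[of "Y *\<^sub>v u"] v2[OF u] Y u by simp
    also have "\<dots> = Cm *\<^sub>v (Y *\<^sub>v u)"
      using Cv[of "Y *\<^sub>v u"] X Y H Fc u by (auto intro!: eq_vecI)
    finally show ?thesis by simp
  qed
  have comH: "Cm *\<^sub>v (H *\<^sub>v u) = H *\<^sub>v (Cm *\<^sub>v u)" if u: "u \<in> carrier_vec n" for u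
  proof -
    have "Cm *\<^sub>v (H *\<^sub>v u) = H *\<^sub>v (X *\<^sub>v (Y *\<^sub>v u)) - H *\<^sub>v (H *\<^sub>v u)"
      using Cv[of "H *\<^sub>v u"] v2[OF u] v1[of "Y *\<^sub>v u"] H Y u by simp
    also have "\<dots> = H *\<^sub>v (Cm *\<^sub>v u)"
      using Cv[OF u] X Y H u by (simp add: mult_minus_distrib_mat_vec[OF H])
    finally show ?thesis .
  qed
  have sub_all: "subspace_vec n (carrier_vec n)" unfolding subspace_vec_def by auto
  have e0: "unit_vec n 0 \<noteq> (0\<^sub>v n :: complex vec)"
  proof
    assume "unit_vec n 0 = (0\<^sub>v n :: complex vec)"
    then have "unit_vec n 0 $ 0 = (0\<^sub>v n :: complex vec) $ 0" by simp
    then show False using n0 by simp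
  qed
  obtain u0 c where u0: "u0 \<in> carrier_vec n" "u0 \<noteq> 0\<^sub>v n" and cu0: "Cm *\<^sub>v u0 = c \<cdot>\<^sub>v u0"
    using eig_in_sub[OF Cmc sub_all _ _ e0] Cmc by auto
  define Wc where "Wc = {u \<in> carrier_vec n. Cm *\<^sub>v u = c \<cdot>\<^sub>v u}"
  have W2: "0\<^sub>v n \<in> Wc" unfolding Wc_def using mult_zero_vec_n[OF Cmc] by (auto intro!: eq_vecI)
  have W3: "v + w \<in> Wc" if "v \<in> Wc" "w \<in> Wc" for v w
  proof -
    have vw: "v \<in> carrier_vec n" "w \<in> carrier_vec n" "Cm *\<^sub>v v = c \<cdot>\<^sub>v v" "Cm *\<^sub>v w = c \<cdot>\<^sub>v w"
      using that unfolding Wc_def by auto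
    have "Cm *\<^sub>v (v + w) = c \<cdot>\<^sub>v (v + w)"
      unfolding mult_add_distrib_mat_vec[OF Cmc vw(1,2)] smult_add_distrib_vec[OF vw(1,2)] vw(3,4) ..
    then show ?thesis using vw unfolding Wc_def by simp
  qed
  have W4: "r \<cdot>\<^sub>v v \<in> Wc" if "v \<in> Wc" for r v
  proof -
    have vw: "v \<in> carrier_vec n" "Cm *\<^sub>v v = c \<cdot>\<^sub>v v"
      using that unfolding Wc_def by auto
    have "Cm *\<^sub>v (r \<cdot>\<^sub>v v) = c \<cdot>\<^sub>v (r \<cdot>\<^sub>v v)"
      unfolding mult_mat_vec[OF Cmc vw(1)] vw(2) smult_smult_assoc by (simp add: mult.commute)
    then show ?thesis using vw unfolding Wc_def by simp
  qed
  have "subspace_vec n Wc" unfolding subspace_vec_def using W2 W3 W4 by (auto simp: Wc_def)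
  moreover have "\<forall>v\<in>Wc. X *\<^sub>v v \<in> Wc \<and> Y *\<^sub>v v \<in> Wc \<and> H *\<^sub>v v \<in> Wc"
  proof
    fix v assume "v \<in> Wc"
    then have vw: "v \<in> carrier_vec n" "Cm *\<^sub>v v = c \<cdot>\<^sub>v v" unfolding Wc_def by auto
    have "Cm *\<^sub>v (X *\<^sub>v v) = c \<cdot>\<^sub>v (X *\<^sub>v v)" unfolding comX[OF vw(1)] vw(2) by (rule mult_mat_vec[OF X vw(1)])
    moreover have "Cm *\<^sub>v (Y *\<^sub>v v) = c \<cdot>\<^sub>v (Y *\<^sub>v v)" unfolding comY[OF vw(1)] vw(2) by (rule mult_mat_vec[OF Y vw(1)])
    moreover have "Cm *\<^sub>v (H *\<^sub>v v) = c \<cdot>\<^sub>v (H *\<^sub>v v)" unfolding comH[OF vw(1)] vw(2) by (rule mult_mat_vec[OF H vw(1)])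
    ultimately show "X *\<^sub>v v \<in> Wc \<and> Y *\<^sub>v v \<in> Wc \<and> H *\<^sub>v v \<in> Wc"
      unfolding Wc_def using X Y H vw(1) by auto
  qed
  ultimately have "Wc = {0\<^sub>v n} \<or> Wc = carrier_vec n" by (rule simple)
  moreover have "u0 \<in> Wc" unfolding Wc_def using u0 cu0 by simp
  ultimately have Wc: "Wc = carrier_vec n" using u0 by auto
  have K: "X *\<^sub>v (Y *\<^sub>v u) = H *\<^sub>v u + c \<cdot>\<^sub>v u" if u: "u \<in> carrier_vec n" for u
  proof -
    have "Cm *\<^sub>v u = c \<cdot>\<^sub>v u" using Wc u unfolding Wc_def by auto
    then have "X *\<^sub>v (Y *\<^sub>v u) - H *\<^sub>v u = c \<cdot>\<^sub>v u" using Cv[OF u] by simp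
    then show ?thesis by (rule vec_rearr2[where n=n, rotated 3]) (use X Y H u in auto)
  qed
  have XT: "X *\<^sub>v u = H *\<^sub>v (T *\<^sub>v u) + c \<cdot>\<^sub>v (T *\<^sub>v u)" if u: "u \<in> carrier_vec n" for u
    using K[of "T *\<^sub>v u"] YTu[OF u] Tc u by simp
  (* eigenvector of H and the orbit *)
  obtain v0 \<mu> where v0: "v0 \<in> carrier_vec n" "v0 \<noteq> 0\<^sub>v n" "H *\<^sub>v v0 = \<mu> \<cdot>\<^sub>v v0"
    using eig_in_sub[OF H sub_all _ _ e0] H by auto
  define Tk where "Tk k = ((*\<^sub>v) T ^^ k)" for k
  have Tkc: "Tk k u \<in> carrier_vec n" if "u \<in> carrier_vec n" for k u
    unfolding Tk_def by (induct k) (use that Tc in auto)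
  have TkS: "Tk (Suc k) u = T *\<^sub>v Tk k u" for k u by (simp add: Tk_def)
  have orbit: "H *\<^sub>v (Tk k u) = (poly f ^^ k) \<alpha> \<cdot>\<^sub>v Tk k u" if u: "u \<in> carrier_vec n" and e: "H *\<^sub>v u = \<alpha> \<cdot>\<^sub>v u" for k u \<alpha>
  proof (induct k)
    case 0
    then show ?case using e by (simp add: Tk_def)
  next
    case (Suc k)
    show ?case unfolding TkS using Teig[OF Tkc[OF u] Suc] by simp
  qed
  have Tknz: "Tk k u \<noteq> 0\<^sub>v n" if u: "u \<in> carrier_vec n" "u \<noteq> 0\<^sub>v n" for k u
  proof (induct k)
    case 0
    then show ?case using u by (simp add: Tk_def)
  next
    case (Suc k)
    then show ?case unfolding TkS using Tinj[OF Tkc[OF u(1)]] by blast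
  qed
  let ?EV = "{\<alpha>. \<exists>u. u \<in> carrier_vec n \<and> u \<noteq> 0\<^sub>v n \<and> H *\<^sub>v u = \<alpha> \<cdot>\<^sub>v u}"
  have evfin: "finite ?EV"
  proof -
    have "?EV \<subseteq> {\<alpha>. poly (char_poly H) \<alpha> = 0}"
      using eigenvalue_root_char_poly[OF H] unfolding eigenvalue_def eigenvector_def dH by auto
    moreover have "char_poly H \<noteq> 0" using degree_monic_char_poly[OF H] by (metis coeff_0 zero_neq_one)
    ultimately show ?thesis using poly_roots_finite finite_subset by blast
  qed
  have "range (\<lambda>k. (poly f ^^ k) \<mu>) \<subseteq> ?EV"
    using orbit[OF v0(1,3)] Tkc[OF v0(1)] Tknz[OF v0(1,2)] by blast
  then have "finite (range (\<lambda>k. (poly f ^^ k) \<mu>))" using evfin finite_subset by blast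
  then have "\<not> inj (\<lambda>k. (poly f ^^ k) \<mu>)" using finite_imageD infinite_UNIV_nat by blast
  then obtain p q where pq0: "p \<noteq> q" "(poly f ^^ p) \<mu> = (poly f ^^ q) \<mu>" unfolding inj_def by blast
  obtain p q where pq: "p < q" "(poly f ^^ p) \<mu> = (poly f ^^ q) \<mu>"
    using pq0 by (metis linorder_neq_iff)
  define \<nu> where "\<nu> = (poly f ^^ p) \<mu>"
  define v1 where "v1 = Tk p v0"
  have v1: "v1 \<in> carrier_vec n" "v1 \<noteq> 0\<^sub>v n" "H *\<^sub>v v1 = \<nu> \<cdot>\<^sub>v v1"
    unfolding v1_def \<nu>_def using Tkc[OF v0(1)] Tknz[OF v0(1,2)] orbit[OF v0(1,3)] by auto
  have per0: "(poly f ^^ (q - p)) \<nu> = \<nu>"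
  proof -
    have "(poly f ^^ (q - p)) \<nu> = (poly f ^^ (q - p + p)) \<mu>" unfolding \<nu>_def by (simp add: funpow_add)
    also have "q - p + p = q" using pq by simp
    finally show ?thesis using pq unfolding \<nu>_def by simp
  qed
  define m where "m = (LEAST d. 0 < d \<and> (poly f ^^ d) \<nu> = \<nu>)"
  have m: "0 < m \<and> (poly f ^^ m) \<nu> = \<nu>" unfolding m_def by (rule LeastI[of _ "q - p"]) (use pq per0 in auto)
  have mmin: "(poly f ^^ d) \<nu> \<noteq> \<nu>" if "0 < d" "d < m" for d
    using not_less_Least[of d "\<lambda>d. 0 < d \<and> (poly f ^^ d) \<nu> = \<nu>"] that unfolding m_def by blast
  define mu where "mu k = (poly f ^^ k) \<nu>" for k
  have muS: "mu (Suc k) = poly f (mu k)" for k by (simp add: mu_def)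
  have mu_add: "mu (i + j) = (poly f ^^ i) (mu j)" for i j by (simp add: mu_def funpow_add)
  have mu_per: "mu (k + m) = mu k" for k using mu_add[of k m] m by (simp add: mu_def)
  have mu_mult: "mu (r + t * m) = mu r" for r t
  proof (induct t)
    case 0
    then show ?case by simp
  next
    case (Suc t)
    have e: "r + Suc t * m = (r + t * m) + m" by simp
    show ?case unfolding e mu_per by (rule Suc)
  qed
  have mu_mod: "mu k = mu (k mod m)" for k
  proof -
    have "k = k mod m + (k div m) * m" by simp
    then have "mu k = mu (k mod m + (k div m) * m)" by (rule arg_cong)
    then show ?thesis unfolding mu_mult .
  qed
  have mu_dist0: "mu i \<noteq> mu j" if "i < j" "j < m" for i j
  proof
    assume eq: "mu i = mu j"
    have "mu (m - j + i) = (poly f ^^ (m - j)) (mu i)" by (rule mu_add)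
    also have "\<dots> = (poly f ^^ (m - j)) (mu j)" by (simp only: eq)
    also have "\<dots> = mu (m - j + j)" by (rule mu_add[symmetric])
    also have "m - j + j = m" using that by simp
    finally have "mu (m - j + i) = mu m" .
    then have "(poly f ^^ (m - j + i)) \<nu> = \<nu>" unfolding mu_def using conjunct2[OF m] by (rule trans)
    moreover have h1: "0 < m - j + i" using that by linarith
    moreover have h2: "m - j + i < m" using that by linarith
    ultimately show False using mmin[OF h1 h2] by simp
  qed
  have mu_dist: "i = j" if "i < m" "j < m" "mu i = mu j" for i j
  proof (rule ccontr)
    assume "i \<noteq> j"
    then consider "i < j" | "j < i" by linarith
    then show False using mu_dist0[of i j] mu_dist0[of j i] that by cases auto
  qed
  (* eigenvector of T^m inside the eigenspace *)
  define S where "S = T ^\<^sub>m m"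
  have Sc: "S \<in> carrier_mat n n" unfolding S_def using Tc by simp
  have Su: "S *\<^sub>v u = Tk m u" if "u \<in> carrier_vec n" for u
    unfolding S_def Tk_def by (rule pow_funpow[OF Tc that])
  define E where "E = {u \<in> carrier_vec n. H *\<^sub>v u = \<nu> \<cdot>\<^sub>v u}"
  have Esub: "subspace_vec n E" unfolding E_def by (rule eigsp_subspace[OF H])
  have Einv: "S *\<^sub>v u \<in> E" if "u \<in> E" for u
    using that orbit[of u \<nu> m] m Tkc[of u m] unfolding E_def by (auto simp: Su)
  obtain v' a where v': "v' \<in> E" "v' \<noteq> 0\<^sub>v n" and a: "S *\<^sub>v v' = a \<cdot>\<^sub>v v'"
    using eig_in_sub[OF Sc Esub Einv, of v1] v1 unfolding E_def by auto
  have v'c: "v' \<in> carrier_vec n" and Hv': "H *\<^sub>v v' = \<nu> \<cdot>\<^sub>v v'" using v' unfolding E_def by auto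
  have a0: "a \<noteq> 0"
  proof
    assume "a = 0"
    then have "Tk m v' = 0\<^sub>v n" using a Su[OF v'c] v'c by (auto intro!: eq_vecI)
    then show False using Tknz[OF v'c v'(2)] by blast
  qed
  define w where "w k = Tk k v'" for k
  have wc: "w k \<in> carrier_vec n" for k unfolding w_def by (rule Tkc[OF v'c])
  have dw: "dim_vec (w k) = n" for k using wc[of k] by auto
  have wnz: "w k \<noteq> 0\<^sub>v n" for k unfolding w_def by (rule Tknz[OF v'c v'(2)])
  have Hw: "H *\<^sub>v w k = mu k \<cdot>\<^sub>v w k" for k unfolding w_def mu_def by (rule orbit[OF v'c Hv'])
  have Tw: "T *\<^sub>v w k = w (Suc k)" for k unfolding w_def by (simp add: TkS)
  have wm: "w m = a \<cdot>\<^sub>v w 0" using a Su[OF v'c] by (simp add: w_def Tk_def)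
  have Yw: "Y *\<^sub>v w (Suc k) = w k" for k using YTu[OF wc[of k]] by (simp add: Tw)
  have Yw0: "Y *\<^sub>v w 0 = inverse a \<cdot>\<^sub>v w (m - 1)"
  proof -
    have "w m = T *\<^sub>v w (m - 1)" using Tw[of "m - 1"] m by simp
    then have "Y *\<^sub>v (a \<cdot>\<^sub>v w 0) = w (m - 1)" using YTu[OF wc[of "m - 1"]] wm by simp
    then have "a \<cdot>\<^sub>v (Y *\<^sub>v w 0) = w (m - 1)" using mult_mat_vec[OF Y wc[of 0]] by simp
    then have "inverse a \<cdot>\<^sub>v (a \<cdot>\<^sub>v (Y *\<^sub>v w 0)) = inverse a \<cdot>\<^sub>v w (m - 1)" by simp
    then show ?thesis using a0 by (simp add: smult_smult_assoc)
  qed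
  have Xw: "X *\<^sub>v w k = (mu (Suc k) + c) \<cdot>\<^sub>v w (Suc k)" for k
    using XT[OF wc[of k]] by (simp add: Tw Hw add_smult_distrib_vec)
  (* wrapped action *)
  have Xw': "X *\<^sub>v w k = ((mu (Suc k) + c) * (if Suc k = m then a else 1)) \<cdot>\<^sub>v w (Suc k mod m)" if k: "k < m" for k
  proof (cases "Suc k = m")
    case True
    then show ?thesis using Xw[of k] wm by (simp add: smult_smult_assoc)
  next
    case False
    then have "Suc k mod m = Suc k" using k by simp
    then show ?thesis using Xw[of k] False by simp
  qed
  have Yw': "Y *\<^sub>v w k = (if k = 0 then inverse a else 1) \<cdot>\<^sub>v w ((k + m - 1) mod m)" if k: "k < m" for k
  proof (cases k)
    case 0
    then show ?thesis using Yw0 m by simp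
  next
    case (Suc k')
    then have "(k + m - 1) mod m = k'" using k by simp
    then show ?thesis using Yw[of k'] Suc wc[of k'] by simp
  qed
  (* spanning *)
  define Wsp where "Wsp = {lc n m w cf | cf. True}"
  have "subspace_vec n Wsp" unfolding subspace_vec_def Wsp_def
  proof (intro conjI ballI allI)
    show "{lc n m w cf |cf. True} \<subseteq> carrier_vec n" by auto
    show "0\<^sub>v n \<in> {lc n m w cf |cf. True}" using lc_zero[of n m w, symmetric] by blast
  next
    fix v u assume "v \<in> {lc n m w cf |cf. True}" "u \<in> {lc n m w cf |cf. True}"
    then show "v + u \<in> {lc n m w cf |cf. True}" using lc_add by blast
  next
    fix r v assume "v \<in> {lc n m w cf |cf. True}"
    then show "r \<cdot>\<^sub>v v \<in> {lc n m w cf |cf. True}" using lc_smult by blast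
  qed
  moreover have "\<forall>v\<in>Wsp. X *\<^sub>v v \<in> Wsp \<and> Y *\<^sub>v v \<in> Wsp \<and> H *\<^sub>v v \<in> Wsp"
  proof
    fix v assume "v \<in> Wsp"
    then obtain cf where v: "v = lc n m w cf" unfolding Wsp_def by blast
    have "X *\<^sub>v v \<in> Wsp" unfolding v Wsp_def
      using lc_shape[OF X, of m w "\<lambda>k. (mu (Suc k) + c) * (if Suc k = m then a else 1)" "\<lambda>k. Suc k mod m" cf] wc Xw' m by auto
    moreover have "Y *\<^sub>v v \<in> Wsp" unfolding v Wsp_def
      using lc_shape[OF Y, of m w "\<lambda>k. if k = 0 then inverse a else 1" "\<lambda>k. (k + m - 1) mod m" cf] wc Yw' m by auto
    moreover have "H *\<^sub>v v \<in> Wsp" unfolding v Wsp_def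
      using lc_eig[OF H, of m w mu cf] wc Hw by auto
    ultimately show "X *\<^sub>v v \<in> Wsp \<and> Y *\<^sub>v v \<in> Wsp \<and> H *\<^sub>v v \<in> Wsp" by blast
  qed
  ultimately have "Wsp = {0\<^sub>v n} \<or> Wsp = carrier_vec n" by (rule simple)
  moreover have "w 0 \<in> Wsp"
  proof -
    have "lc n m w (\<lambda>k. if k = 0 then 1 else 0) = w 0"
    proof (rule eq_vecI)
      fix i assume "i < dim_vec (w 0)"
      then have i: "i < n" using dw by simp
      have "(\<Sum>k<m. (if k = 0 then 1 else 0) * w k $ i) = (\<Sum>k<m. if k = 0 then w k $ i else 0)"
        by (rule sum.cong) auto
      also have "\<dots> = w 0 $ i" using m by (simp add: sum.delta')
      finally show "lc n m w (\<lambda>k. if k = 0 then 1 else 0) $ i = w 0 $ i" using i by (simp add: lc_def)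
    qed (simp add: dw)
    then show ?thesis unfolding Wsp_def by (metis (mono_tags, lifting) mem_Collect_eq)
  qed
  ultimately have Wsp: "Wsp = carrier_vec n" using wnz[of 0] by auto
  (* independence *)
  have smult0: "0 \<cdot>\<^sub>v x = 0\<^sub>v n" if "x \<in> carrier_vec n" for x :: "complex vec"
    using that by (auto intro!: eq_vecI)
  have indep: "K \<le> m \<Longrightarrow> lc n K w cf = 0\<^sub>v n \<Longrightarrow> k < K \<Longrightarrow> cf k = 0" for K cf k
  proof (induct K arbitrary: cf k)
    case 0
    then show ?case by simp
  next
    case (Suc K)
    have HL: "H *\<^sub>v lc n (Suc K) w cf = lc n (Suc K) w (\<lambda>k. cf k * mu k)"
      by (rule lc_eig[OF H]) (use wc Hw in auto)
    have "lc n (Suc K) w (\<lambda>k. cf k * mu k) = 0\<^sub>v n"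
      using HL Suc(3) mult_zero_vec_n[OF H] by simp
    moreover have "lc n (Suc K) w (\<lambda>k. mu K * cf k) = 0\<^sub>v n"
    proof -
      have "lc n (Suc K) w (\<lambda>k. mu K * cf k) = mu K \<cdot>\<^sub>v lc n (Suc K) w cf" by (rule lc_smult[symmetric])
      also have "\<dots> = 0\<^sub>v n" unfolding Suc(3) by (auto intro!: eq_vecI)
      finally show ?thesis .
    qed
    ultimately have "lc n (Suc K) w (\<lambda>k. cf k * mu k - mu K * cf k) = 0\<^sub>v n"
      using lc_diff[of n "Suc K" w "\<lambda>k. cf k * mu k" "\<lambda>k. mu K * cf k"] by simp
    then have "lc n K w (\<lambda>k. cf k * mu k - mu K * cf k) + 0 \<cdot>\<^sub>v w K = 0\<^sub>v n"
      unfolding lc_Suc[OF wc] by simp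
    then have "lc n K w (\<lambda>k. cf k * mu k - mu K * cf k) = 0\<^sub>v n"
      unfolding smult0[OF wc] by simp
    then have z: "cf k * mu k - mu K * cf k = 0" if "k < K" for k
      using Suc(1)[of "\<lambda>k. cf k * mu k - mu K * cf k" k] Suc(2) that by simp
    have zk: "cf k = 0" if "k < K" for k
    proof -
      have "cf k * (mu k - mu K) = 0" using z[OF that] by (simp add: algebra_simps)
      moreover have "mu k \<noteq> mu K" using mu_dist[of k K] that Suc(2) by auto
      ultimately show ?thesis by simp
    qed
    have "lc n K w cf = lc n K w (\<lambda>k. 0)" by (rule lc_cong) (use zk in auto)
    then have "lc n K w cf = 0\<^sub>v n" by (simp add: lc_zero)
    then have "cf K \<cdot>\<^sub>v w K = 0\<^sub>v n" using Suc(3) unfolding lc_Suc[OF wc] using wc[of K] by simp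
    then have cK: "cf K = 0"
    proof -
      assume e: "cf K \<cdot>\<^sub>v w K = 0\<^sub>v n"
      obtain i where i: "i < n" "w K $ i \<noteq> 0" using nonzero_vec_index[OF wc wnz] by blast
      have "(cf K \<cdot>\<^sub>v w K) $ i = 0" using e i by simp
      then show ?thesis using i dw by simp
    qed
    show ?case using zk cK Suc(4) unfolding less_Suc_eq by auto
  qed
  have lc_inj: "cf k = cg k" if "lc n m w cf = lc n m w cg" "k < m" for cf cg k
  proof -
    have "lc n m w (\<lambda>k. cf k - cg k) = 0\<^sub>v n" using that(1) lc_diff[of n m w cf cg] minus_cancel_vec[OF lc_carrier[of n m w cg]] by simp
    then show ?thesis using indep[of m "\<lambda>k. cf k - cg k" k] that(2) by simp
  qed
  (* m = n *)
  have "\<forall>j. \<exists>cf. j < n \<longrightarrow> lc n m w cf = unit_vec n j"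
  proof
    fix j
    have "unit_vec n j \<in> Wsp" using Wsp by simp
    then show "\<exists>cf. j < n \<longrightarrow> lc n m w cf = unit_vec n j" unfolding Wsp_def by auto
  qed
  then obtain cfs where cfs: "\<And>j. j < n \<Longrightarrow> lc n m w (cfs j) = unit_vec n j" by metis
  have sumA: "(\<Sum>i<n. \<Sum>k<m. cfs i k * w k $ i) = of_nat n"
  proof -
    have "(\<Sum>k<m. cfs i k * w k $ i) = 1" if "i < n" for i
      using arg_cong[OF cfs[OF that], of "\<lambda>v. v $ i"] that by (simp add: lc_def)
    then show ?thesis by simp
  qed
  have sumB: "(\<Sum>k<m. \<Sum>i<n. cfs i k * w k $ i) = of_nat m"
  proof -
    have "(\<Sum>i<n. cfs i k * w k $ i) = 1" if k: "k < m" for k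
    proof -
      have "lc n m w (\<lambda>k'. \<Sum>i<n. cfs i k' * w k $ i) = lc n m w (\<lambda>k'. if k' = k then 1 else 0)"
      proof (rule eq_vecI)
        fix l assume "l < dim_vec (lc n m w (\<lambda>k'. if k' = k then 1 else 0))"
        then have l: "l < n" by simp
        have inner: "(\<Sum>k'<m. cfs i k' * w k' $ l) = (if l = i then 1 else 0)" if "i < n" for i
          using arg_cong[OF cfs[OF that], of "\<lambda>v. v $ l"] that l by (simp add: lc_def)
        have "lc n m w (\<lambda>k'. \<Sum>i<n. cfs i k' * w k $ i) $ l = (\<Sum>k'<m. \<Sum>i<n. cfs i k' * w k $ i * w k' $ l)"
          using l by (simp add: lc_def sum_distrib_right)
        also have "\<dots> = (\<Sum>i<n. w k $ i * (\<Sum>k'<m. cfs i k' * w k' $ l))"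
          by (subst sum.swap) (simp add: sum_distrib_left mult_ac)
        also have "\<dots> = (\<Sum>i<n. w k $ i * (if l = i then 1 else 0))"
          by (rule sum.cong) (simp_all add: inner)
        also have "\<dots> = w k $ l" using l by (simp add: if_distrib[of "\<lambda>x. _ * x"] sum.delta cong: if_cong)
        also have "\<dots> = lc n m w (\<lambda>k'. if k' = k then 1 else 0) $ l"
        proof -
          have "(\<Sum>k'<m. (if k' = k then 1 else 0) * w k' $ l) = (\<Sum>k'<m. if k' = k then w k' $ l else 0)"
            by (rule sum.cong) auto
          also have "\<dots> = w k $ l" using k by (simp add: sum.delta')
          finally show ?thesis using l by (simp add: lc_def)
        qed
        finally show "lc n m w (\<lambda>k'. \<Sum>i<n. cfs i k' * w k $ i) $ l = lc n m w (\<lambda>k'. if k' = k then 1 else 0) $ l" .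
      qed simp
      from lc_inj[OF this k] show ?thesis by simp
    qed
    then show ?thesis by simp
  qed
  have "of_nat n = (of_nat m :: complex)" using sumA sumB sum.swap[of "\<lambda>i k. cfs i k * w k $ i" "{..<m}" "{..<n}"] by simp
  then have mn: "m = n" by simp
  have npos: "0 < n" using n0 by simp
  (* change of basis *)
  define P where "P = mat n n (\<lambda>(i,k). w k $ i)"
  define Q where "Q = mat n n (\<lambda>(k,j). cfs j k)"
  have Pc: "P \<in> carrier_mat n n" and Qc: "Q \<in> carrier_mat n n" unfolding P_def Q_def by auto
  have PQ: "P * Q = 1\<^sub>m n"
  proof (rule eq_matI)
    fix i j assume "i < dim_row (1\<^sub>m n :: complex mat)" "j < dim_col (1\<^sub>m n :: complex mat)"
    hence i: "i < n" and j: "j < n" by auto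
    have "(P * Q) $$ (i,j) = (\<Sum>k<n. w k $ i * cfs j k)"
      using i j unfolding P_def Q_def by (simp add: scalar_prod_def atLeast0LessThan)
    also have "\<dots> = lc n m w (cfs j) $ i" using i mn by (simp add: lc_def mult.commute)
    also have "\<dots> = 1\<^sub>m n $$ (i,j)" using cfs[OF j] i j by simp
    finally show "(P * Q) $$ (i,j) = 1\<^sub>m n $$ (i,j)" .
  qed (use Pc Qc in auto)
  have QP: "Q * P = 1\<^sub>m n" by (rule mat_mult_left_right_inverse[OF Pc Qc PQ])
  (* the sequence lambda *)
  define lam where "lam i = mu (nat (i mod int n))" for i
  have lam_nat: "lam (int k) = mu k" for k
  proof -
    have "nat (int k mod int n) = k mod n" by (simp add: of_nat_mod[symmetric])
    then show ?thesis unfolding lam_def using mu_mod[of k] mn by simp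
  qed
  have lam_nat1: "lam (int k + 1) = mu (Suc k)" for k using lam_nat[of "Suc k"] by (simp add: add.commute)
  have lam_succ: "lam (i + 1) = poly f (lam i)" for i
  proof -
    define k where "k = nat (i mod int n)"
    have ik: "i mod int n = int k" unfolding k_def using npos by simp
    have "(i + 1) mod int n = (i mod int n + 1) mod int n" by (simp add: mod_add_left_eq)
    also have "\<dots> = int ((k + 1) mod n)" unfolding ik by (simp add: of_nat_mod add.commute)
    finally have "lam (i + 1) = mu ((k + 1) mod n)" unfolding lam_def by simp
    also have "\<dots> = mu (Suc k)" using mu_mod[of "Suc k"] mn by simp
    also have "\<dots> = poly f (lam i)" unfolding muS lam_def k_def ..
    finally show ?thesis .
  qed
  have lamS: "lam \<in> S_f f" unfolding S_f_def using lam_succ by simp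
  have lamO1: "k \<in> {j * int n |j. True}" if k: "\<forall>i. lam (i + k) = lam i" for k
  proof -
    have "lam (0 + k) = lam 0" using spec[OF k, of 0] .
    then have "mu (nat (k mod int n)) = mu 0" using lam_nat[of 0] unfolding lam_def by simp
    moreover have "nat (k mod int n) < m" using npos mn by (simp add: nat_less_iff)
    ultimately have "nat (k mod int n) = 0" using mu_dist[of "nat (k mod int n)" 0] m by simp
    then have "k mod int n = 0" using npos by (simp add: nat_eq_iff)
    then have "k = (k div int n) * int n" using div_mult_mod_eq[of k "int n"] by simp
    then show ?thesis by blast
  qed
  have lamO2: "lam (i + j * int n) = lam i" for i j unfolding lam_def by simp
  have lamO: "seq_order lam (int n)" unfolding seq_order_def
  proof (intro conjI)
    show "{k. \<forall>i. lam (i + k) = lam i} = {j * int n |j. True}"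
      using lamO1 lamO2 by auto
  qed simp
  (* nilpotency gives a zero *)
  have "\<exists>k<n. mu (Suc k) + c = 0"
  proof (rule ccontr)
    assume "\<not> (\<exists>k<n. mu (Suc k) + c = 0)"
    then have nz: "mu (Suc k) + c \<noteq> 0" if "k < n" for k using that by auto
    define dd where "dd k = (mu (Suc k) + c) * (if Suc k = n then a else 1)" for k
    have Xw'': "X *\<^sub>v w k = dd k \<cdot>\<^sub>v w (Suc k mod n)" if "k < n" for k
      using Xw'[of k] that mn unfolding dd_def by simp
    have ddnz: "dd k \<noteq> 0" if "k < n" for k using nz[OF that] a0 unfolding dd_def by simp
    have pw: "\<exists>s. s \<noteq> 0 \<and> ((*\<^sub>v) X ^^ j) (w 0) = s \<cdot>\<^sub>v w (j mod n)" for j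
    proof (induct j)
      case 0
      then show ?case using wc[of 0] by (intro exI[of _ 1]) auto
    next
      case (Suc j)
      then obtain s where s: "s \<noteq> 0" "((*\<^sub>v) X ^^ j) (w 0) = s \<cdot>\<^sub>v w (j mod n)" by blast
      have jn: "j mod n < n" using npos by simp
      have "((*\<^sub>v) X ^^ Suc j) (w 0) = X *\<^sub>v (s \<cdot>\<^sub>v w (j mod n))" using s by simp
      also have "\<dots> = s \<cdot>\<^sub>v (X *\<^sub>v w (j mod n))" by (rule mult_mat_vec[OF X wc])
      also have "\<dots> = (s * dd (j mod n)) \<cdot>\<^sub>v w (Suc j mod n)"
        unfolding Xw''[OF jn] smult_smult_assoc by (simp add: mod_Suc_eq)
      finally show ?case using s(1) ddnz[OF jn] by (intro exI[of _ "s * dd (j mod n)"]) simp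
    qed
    obtain s where s: "s \<noteq> 0" "((*\<^sub>v) X ^^ n) (w 0) = s \<cdot>\<^sub>v w 0" using pw[of n] by auto
    have "((*\<^sub>v) X ^^ n) (w 0) = (X ^\<^sub>m n) *\<^sub>v w 0" by (rule pow_funpow[OF X wc, symmetric])
    also have "\<dots> = 0\<^sub>v n" unfolding assms(3) using wc[of 0] by (auto intro!: eq_vecI)
    finally have "s \<cdot>\<^sub>v w 0 = 0\<^sub>v n" using s by simp
    moreover obtain i where i: "i < n" "w 0 $ i \<noteq> 0" using nonzero_vec_index[OF wc wnz] by blast
    ultimately have "s * w 0 $ i = 0" using dw by (metis index_smult_vec(1) index_zero_vec(1))
    then show False using s(1) i(2) by simp
  qed
  then obtain k0 where k0: "k0 < n" "mu (Suc k0) + c = 0" by blast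
  have zero: "\<exists>i. lam i + c = 0" using k0 lam_nat[of "Suc k0"] by (intro exI[of _ "int (Suc k0)"]) simp
  (* the matrices *)
  have wcn: "\<And>k. k < n \<Longrightarrow> w k \<in> carrier_vec n" using wc by simp
  have XP: "X * P = P * B'_X n lam c a"
  proof -
    have "X * P = P * mat n n (\<lambda>(i,k). if i = Suc k mod n then (mu (Suc k) + c) * (if Suc k = n then a else 1) else 0)"
      unfolding P_def by (rule mat_shape[OF X wcn]) (use Xw' mn npos in auto)
    also have "mat n n (\<lambda>(i,k). if i = Suc k mod n then (mu (Suc k) + c) * (if Suc k = n then a else 1) else 0) = B'_X n lam c a"
      unfolding B'_X_def by (rule eq_matI) (auto simp: lam_nat1)
    finally show ?thesis .
  qed
  have YP: "Y * P = P * B'_Y n a"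
  proof -
    have "Y * P = P * mat n n (\<lambda>(i,k). if i = (k + n - 1) mod n then (if k = 0 then inverse a else 1) else 0)"
      unfolding P_def by (rule mat_shape[OF Y wcn]) (use Yw' mn npos in auto)
    also have "mat n n (\<lambda>(i,k). if i = (k + n - 1) mod n then (if k = 0 then inverse a else 1) else 0) = B'_Y n a"
      unfolding B'_Y_def by (rule eq_matI) auto
    finally show ?thesis .
  qed
  have HP: "H * P = P * B'_H n lam"
  proof -
    have "H * P = P * mat n n (\<lambda>(i,k). if i = k then mu k else 0)"
      unfolding P_def by (rule mat_shape[OF H wcn, where d=mu and \<sigma>="\<lambda>k. k"]) (use Hw in auto)
    also have "mat n n (\<lambda>(i,k). if i = k then mu k else 0) = B'_H n lam"
      unfolding B'_H_def by (rule eq_matI) (auto simp: lam_nat)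
    finally show ?thesis .
  qed
  have BX: "B'_X n lam c a \<in> carrier_mat n n" and BY: "B'_Y n a \<in> carrier_mat n n"
    and BH: "B'_H n lam \<in> carrier_mat n n" unfolding B'_X_def B'_Y_def B'_H_def by auto
  have iso: "Hf_iso n X Y H (B'_X n lam c a) (B'_Y n a) (B'_H n lam)"
    unfolding Hf_iso_def
    apply (rule exI[of _ Q], rule exI[of _ P])
    using Qc Pc QP PQ iso_from[OF Pc Qc X BX PQ QP XP] iso_from[OF Pc Qc Y BY PQ QP YP]
      iso_from[OF Pc Qc H BH PQ QP HP] by simp
  show ?thesis using a0 lamS lamO zero iso by (intro exI[of _ c] exI[of _ a] exI[of _ lam]) simp
qed

end
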